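(* Let $\kappa$ and $\lambda$ be infinite cardinals with $\kappa^{<\lambda}=\kappa\geq\lambda$, and let $P$ be the set of all partial functions from $\kappa$ to $\kappa$ of cardinality less than $\lambda$. Let $d\geq1$ and let $\kappa_1,\dots,\kappa_d$ be cardinals such that $\kappa_1=\kappa^+$ and, for every $i<d$, there is a cardinal $\mu_i\geq 2^{\kappa_i}$ with $\kappa_{i+1}=\mu_i^+$ and $\mu_i^{\kappa_i}=\mu_i$. Then for every function $p:\kappa_1\times\cdots\times\kappa_d\to P$ there exist stationary sets $\kappa_1'\subseteq\kappa_1,\dots,\kappa_d'\subseteq\kappa_d$ such that $\bigcup p[\kappa_1'\times\cdots\times\kappa_d']$ is a function.
   Context: Partial functions are identified with their graphs; $p[A]$ denotes the image $\{p(x):x\in A\}$. A subset of a regular uncountable cardinal $\nu$ is stationary if it meets every closed unbounded subset of $\nu$. $\kappa^{<\lambda}=\sup_{\nu<\lambda}\kappa^\nu$. *)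

theory Defs
  imports Main "HOL-Library.FuncSet"
begin

text \<open>Ordinals are represented by elements of a well-ordered type; the ordinal
  (von Neumann set) denoted by an element c is its initial segment seg c.\<close>

definition seg :: "'a::wellorder \<Rightarrow> 'a set" where
  "seg c = {x. x < c}"

definition is_cardinal :: "'a::wellorder \<Rightarrow> bool" where
  "is_cardinal c \<longleftrightarrow> (\<forall>d<c. \<not> (\<exists>f. bij_betw f (seg d) (seg c)))"

definition is_succ_card :: "'a::wellorder \<Rightarrow> 'a \<Rightarrow> bool" where
  "is_succ_card c k \<longleftrightarrow> is_cardinal c \<and>
     (card_of (seg c), cardSuc (card_of (seg k))) \<in> ordIso"

definition club :: "'a::wellorder \<Rightarrow> 'a set \<Rightarrow> bool" where
  "club k C \<longleftrightarrow> C \<subseteq> seg k \<and>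
     (\<forall>\<alpha><k. \<exists>\<beta>\<in>C. \<alpha> < \<beta>) \<and>
     (\<forall>\<gamma><k. ((\<exists>\<beta>\<in>C. \<beta> < \<gamma>) \<and> (\<forall>\<alpha><\<gamma>. \<exists>\<beta>\<in>C. \<alpha> < \<beta> \<and> \<beta> < \<gamma>)) \<longrightarrow> \<gamma> \<in> C)"

definition stationary :: "'a::wellorder \<Rightarrow> 'a set \<Rightarrow> bool" where
  "stationary k S \<longleftrightarrow> S \<subseteq> seg k \<and> (\<forall>C. club k C \<longrightarrow> S \<inter> C \<noteq> {})"

definition small_partial_functions :: "'a::wellorder \<Rightarrow> 'a \<Rightarrow> ('a \<times> 'a) set set" where
  "small_partial_functions kap lam =
     {f. f \<subseteq> seg kap \<times> seg kap \<and> single_valued f \<and>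
         (card_of f, card_of (seg lam)) \<in> ordLess}"

end

theory Submission
  imports Defs
begin
unbundle cardinal_syntax

lemma test: "|{x::nat. x < 3}| \<le>o |UNIV::nat set|"
  by (simp add: card_of_mono1)

lemma Func_mono2:
  assumes "inj_on j B'" "j ` B' \<subseteq> B"
  shows "|Func A B'| \<le>o |Func A B|"
proof -
  let ?F = "\<lambda>h a. if a \<in> A then j (h a) else undefined"
  have "inj_on ?F (Func A B')"
  proof (rule inj_onI)
    fix h h' assume h: "h \<in> Func A B'" and h': "h' \<in> Func A B'" and e: "?F h = ?F h'"
    show "h = h'"
    proof
      fix a show "h a = h' a"
      proof (cases "a \<in> A")
        case True
        hence "j (h a) = j (h' a)" using fun_cong[OF e, of a] by simp
        moreover have "h a \<in> B'" "h' a \<in> B'" using h h' True unfolding Func_def by auto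
        ultimately show ?thesis using assms(1) by (meson inj_onD)
      next
        case False thus ?thesis using h h' unfolding Func_def by auto
      qed
    qed
  qed
  moreover have "?F ` Func A B' \<subseteq> Func A B" using assms(2) unfolding Func_def by auto
  ultimately show ?thesis using card_of_ordLeq by blast
qed

lemma Func_mono1:
  assumes "inj_on i D" "i ` D \<subseteq> E" "D \<noteq> {}"
  shows "|Func D B| \<le>o |Func E B|"
proof (cases "B = {}")
  case True
  then have "Func D B = {}" using assms(3) unfolding Func_def by auto
  thus ?thesis by (simp add: card_of_empty)
next
  case False
  then obtain b0 where b0: "b0 \<in> B" by auto
  let ?F = "\<lambda>h e. if e \<in> i ` D then h (inv_into D i e) else if e \<in> E then b0 else undefined"
  have "inj_on ?F (Func D B)"
  proof (rule inj_onI)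
    fix h h' assume h: "h \<in> Func D B" and h': "h' \<in> Func D B" and e: "?F h = ?F h'"
    show "h = h'"
    proof
      fix a show "h a = h' a"
      proof (cases "a \<in> D")
        case True
        have ia: "i a \<in> i ` D" using True by blast
        have "h (inv_into D i (i a)) = h' (inv_into D i (i a))"
          using fun_cong[OF e, of "i a"] ia by simp
        thus ?thesis using True assms(1) by (simp add: inv_into_f_f)
      next
        case False thus ?thesis using h h' unfolding Func_def by auto
      qed
    qed
  qed
  moreover have "?F ` Func D B \<subseteq> Func E B"
    using assms(1,2) b0 unfolding Func_def by (auto intro!: inv_into_into simp: image_subset_iff)
  ultimately show ?thesis using card_of_ordLeq by blast
qed

lemma seg_small:
  fixes K b :: "'a::wellorder"
  assumes "is_cardinal K" "|seg K| =o cardSuc |A|" "b < K"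
  shows "|seg b| \<le>o |A|"
proof (rule ccontr)
  assume "\<not> |seg b| \<le>o |A|"
  then have 1: "|A| <o |seg b|"
    using not_ordLeq_iff_ordLess[OF card_of_Well_order[of A] card_of_Well_order[of "seg b"]] by simp
  have 2: "cardSuc |A| \<le>o |seg b|" by (rule cardSuc_least[OF card_of_Card_order card_of_Card_order 1])
  have 3: "|seg K| \<le>o |seg b|" by (rule ordIso_ordLeq_trans[OF assms(2) 2])
  have 4: "|seg b| \<le>o |seg K|" by (rule card_of_mono1) (use assms(3) in \<open>auto simp: seg_def\<close>)
  have "|seg b| =o |seg K|" using 3 4 by (simp add: ordIso_iff_ordLeq)
  then have "\<exists>f. bij_betw f (seg b) (seg K)" using card_of_ordIso[of "seg b" "seg K"] by simp
  with assms(1,3) show False unfolding is_cardinal_def by (elim allE[of _ b]) simp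
qed

lemma seg_infinite:
  assumes "|seg K| =o cardSuc |A|" "infinite A"
  shows "infinite (seg K)"
proof -
  have 1: "|A| \<le>o cardSuc |A|" by (rule cardSuc_ordLeq[OF card_of_Card_order])
  have 2: "|A| \<le>o |seg K|" by (rule ordLeq_ordIso_trans[OF 1 ordIso_symmetric[OF assms(1)]])
  show ?thesis by (rule card_of_ordLeq_infinite[OF 2 assms(2)])
qed

lemma bounded:
  fixes K :: "'a::wellorder"
  assumes K: "is_cardinal K" and iso: "|seg K| =o cardSuc |A|" and inf: "infinite A"
    and B: "B \<subseteq> seg K" and BA: "|B| \<le>o |A|"
  shows "\<exists>\<beta><K. \<forall>b\<in>B. b < \<beta>"
proof (rule ccontr)
  assume no: "\<not> ?thesis"
  have sub: "seg K \<subseteq> B \<union> (\<Union>b\<in>B. seg b)"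
  proof
    fix x assume "x \<in> seg K"
    then have "x < K" by (simp add: seg_def)
    with no obtain b where "b \<in> B" "\<not> b < x" by blast
    then have "x = b \<or> x < b" by auto
    then show "x \<in> B \<union> (\<Union>b\<in>B. seg b)" using \<open>b \<in> B\<close> by (auto simp: seg_def)
  qed
  have U: "|\<Union>b\<in>B. seg b| \<le>o |A|"
  proof (rule card_of_UNION_ordLeq_infinite[OF inf BA], intro ballI)
    fix b assume "b \<in> B"
    then have "b < K" using B by (auto simp: seg_def)
    then show "|seg b| \<le>o |A|" by (rule seg_small[OF K iso])
  qed
  have Un: "|B \<union> (\<Union>b\<in>B. seg b)| \<le>o |A|"
    by (rule Un_Cinfinite_bound[OF BA U]) (simp add: cinfinite_def Field_card_of inf card_of_card_order_on)
  have 1: "|seg K| \<le>o |A|" by (rule ordLeq_transitive[OF card_of_mono1[OF sub] Un])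
  have 2: "|A| <o |seg K|"
    by (rule ordLess_ordIso_trans[OF cardSuc_greater[OF card_of_Card_order] ordIso_symmetric[OF iso]])
  show False using not_ordLess_ordLeq[OF 2] 1 by contradiction
qed

lemma club_seg:
  fixes K :: "'a::wellorder"
  assumes K: "is_cardinal K" and iso: "|seg K| =o cardSuc |A|" and inf: "infinite A"
  shows "club K (seg K)"
  unfolding club_def
proof (intro conjI allI impI)
  fix \<alpha> assume "\<alpha> < K"
  have "A \<noteq> {}" using inf by auto
  then obtain a where "a \<in> A" by blast
  then have "inj_on (\<lambda>_. a) {\<alpha>} \<and> (\<lambda>_. a) ` {\<alpha>} \<subseteq> A" by simp
  then have "|{\<alpha>}| \<le>o |A|" using card_of_ordLeq[of "{\<alpha>}" A] by blast
  moreover have "{\<alpha>} \<subseteq> seg K" using \<open>\<alpha> < K\<close> by (simp add: seg_def)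
  ultimately obtain \<beta> where "\<beta> < K" "\<alpha> < \<beta>" using bounded[OF K iso inf] by blast
  then show "\<exists>\<beta>\<in>seg K. \<alpha> < \<beta>" by (auto simp: seg_def)
qed (auto simp: seg_def)

lemma club_inter:
  fixes K :: "'a::wellorder" and C :: "'j \<Rightarrow> 'a set"
  assumes K: "is_cardinal K" and iso: "|seg K| =o cardSuc |A|" and inf: "infinite A"
    and J: "|J| \<le>o |A|" and cl: "\<forall>j\<in>J. club K (C j)"
  shows "\<exists>\<gamma><K. \<forall>j\<in>J. \<gamma> \<in> C j"
proof (cases "J = {}")
  case True
  have "seg K \<noteq> {}" using seg_infinite[OF iso inf] by auto
  then show ?thesis using True by (auto simp: seg_def)
next
  case False
  have step: "\<exists>\<beta><K. \<alpha> < \<beta> \<and> (\<forall>j\<in>J. \<exists>c\<in>C j. \<alpha> < c \<and> c < \<beta>)" if "\<alpha> < K" for \<alpha>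
  proof -
    have "\<forall>j\<in>J. \<exists>c\<in>C j. \<alpha> < c" using cl that unfolding club_def by blast
    then obtain c where c: "\<forall>j\<in>J. c j \<in> C j \<and> \<alpha> < c j"
      using bchoice[of J "\<lambda>j c. c \<in> C j \<and> \<alpha> < c"] by blast
    have "c ` J \<subseteq> seg K"
    proof
      fix y assume "y \<in> c ` J"
      then obtain j where j: "j \<in> J" "y = c j" by blast
      then have "c j \<in> C j" "C j \<subseteq> seg K" using c cl unfolding club_def by auto
      then show "y \<in> seg K" using j by blast
    qed
    moreover have "|c ` J| \<le>o |A|" by (rule ordLeq_transitive[OF card_of_image J])
    ultimately have "\<exists>\<beta><K. \<forall>b\<in>c ` J. b < \<beta>" by (rule bounded[OF K iso inf])
    then obtain \<beta> where \<beta>: "\<beta> < K" "\<forall>b\<in>c ` J. b < \<beta>" by blast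
    from False obtain j0 where "j0 \<in> J" by blast
    then have "\<alpha> < c j0" "c j0 < \<beta>" using c \<beta> by auto
    then have "\<alpha> < \<beta>" by (rule less_trans)
    then show ?thesis using \<beta> c by blast
  qed
  then have "\<forall>\<alpha>. \<exists>\<beta>. \<alpha> < K \<longrightarrow> \<beta> < K \<and> \<alpha> < \<beta> \<and> (\<forall>j\<in>J. \<exists>c\<in>C j. \<alpha> < c \<and> c < \<beta>)" by blast
  then have "\<exists>nx. \<forall>\<alpha>. \<alpha> < K \<longrightarrow> nx \<alpha> < K \<and> \<alpha> < nx \<alpha> \<and> (\<forall>j\<in>J. \<exists>c\<in>C j. \<alpha> < c \<and> c < nx \<alpha>)" by (rule choice)
  then obtain nx where nx0: "\<forall>\<alpha>. \<alpha> < K \<longrightarrow> nx \<alpha> < K \<and> \<alpha> < nx \<alpha> \<and> (\<forall>j\<in>J. \<exists>c\<in>C j. \<alpha> < c \<and> c < nx \<alpha>)"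
    by (elim exE)
  have nx: "\<And>\<alpha>. \<alpha> < K \<Longrightarrow> nx \<alpha> < K \<and> \<alpha> < nx \<alpha> \<and> (\<forall>j\<in>J. \<exists>c\<in>C j. \<alpha> < c \<and> c < nx \<alpha>)"
    using nx0 by blast
  have "seg K \<noteq> {}" using seg_infinite[OF iso inf] by auto
  then obtain \<alpha>0 where a0: "\<alpha>0 < K" by (auto simp: seg_def)
  define s where "s = rec_nat \<alpha>0 (\<lambda>_ a. nx a)"
  have s0: "s 0 = \<alpha>0" and sS: "\<And>n. s (Suc n) = nx (s n)" by (simp_all add: s_def)
  have sK: "s n < K" for n
  proof (induction n)
    case 0 show ?case using a0 s0 by simp
  next
    case (Suc n) show ?case unfolding sS using nx[OF Suc] by (rule conjunct1)
  qed
  have "range s \<subseteq> seg K" using sK by (auto simp: seg_def)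
  moreover have "|range s| \<le>o |A|"
    by (rule ordLeq_transitive[OF card_of_image infinite_iff_card_of_nat[THEN iffD1, OF inf]])
  ultimately have "\<exists>\<beta><K. \<forall>b\<in>range s. b < \<beta>" by (rule bounded[OF K iso inf])
  then obtain \<beta>0 where b0: "\<beta>0 < K" "\<forall>n. s n < \<beta>0" by auto
  define \<gamma> where "\<gamma> = (LEAST \<gamma>. \<forall>n. s n < \<gamma>)"
  have g1: "\<forall>n. s n < \<gamma>" unfolding \<gamma>_def by (rule LeastI[of _ \<beta>0]) (rule b0(2))
  have "\<gamma> \<le> \<beta>0" unfolding \<gamma>_def by (rule Least_le) (rule b0(2))
  then have gK: "\<gamma> < K" using b0 by simp
  have g2: "\<exists>n. \<alpha> \<le> s n" if "\<alpha> < \<gamma>" for \<alpha>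
  proof -
    have "\<not> (\<forall>n. s n < \<alpha>)" using not_less_Least[OF that[unfolded \<gamma>_def]] by blast
    then show ?thesis by (auto simp: not_less)
  qed
  have "\<gamma> \<in> C j" if "j \<in> J" for j
  proof -
    have clo: "\<forall>\<gamma><K. ((\<exists>\<beta>\<in>C j. \<beta> < \<gamma>) \<and> (\<forall>\<alpha><\<gamma>. \<exists>\<beta>\<in>C j. \<alpha> < \<beta> \<and> \<beta> < \<gamma>)) \<longrightarrow> \<gamma> \<in> C j"
      using cl that unfolding club_def by blast
    have cc: "\<exists>c\<in>C j. s n < c \<and> c < s (Suc n)" for n
    proof -
      have "\<forall>j\<in>J. \<exists>c\<in>C j. s n < c \<and> c < nx (s n)" using nx[OF sK[of n]] by blast
      then show ?thesis using that unfolding sS by blast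
    qed
    have A1: "\<exists>\<beta>\<in>C j. \<beta> < \<gamma>"
    proof -
      obtain c where "c \<in> C j" "c < s (Suc 0)" using cc[of 0] by blast
      moreover have "s (Suc 0) < \<gamma>" using g1 by blast
      ultimately show ?thesis using less_trans by blast
    qed
    have A2: "\<forall>\<alpha><\<gamma>. \<exists>\<beta>\<in>C j. \<alpha> < \<beta> \<and> \<beta> < \<gamma>"
    proof (intro allI impI)
      fix \<alpha> assume "\<alpha> < \<gamma>"
      then obtain n where "\<alpha> \<le> s n" using g2 by blast
      moreover obtain c where "c \<in> C j" "s n < c" "c < s (Suc n)"
        using cc[of n] by blast
      moreover have "s (Suc n) < \<gamma>" using g1 by blast
      ultimately have "\<alpha> < c" "c < \<gamma>" by auto
      then show "\<exists>\<beta>\<in>C j. \<alpha> < \<beta> \<and> \<beta> < \<gamma>" using \<open>c \<in> C j\<close> by blast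
    qed
    show ?thesis using clo gK A1 A2 by blast
  qed
  then show ?thesis using gK by blast
qed

lemma pigeon:
  fixes K :: "'a::wellorder"
  assumes K: "is_cardinal K" and iso: "|seg K| =o cardSuc |A|" and inf: "infinite A"
    and g: "|g ` seg K| \<le>o |A|"
  shows "\<exists>y. stationary K {x\<in>seg K. g x = y}"
proof (rule ccontr)
  assume "\<not> ?thesis"
  then have "\<forall>y. \<exists>C. club K C \<and> {x\<in>seg K. g x = y} \<inter> C = {}" unfolding stationary_def by auto
  then have "\<exists>C. \<forall>y. club K (C y) \<and> {x\<in>seg K. g x = y} \<inter> C y = {}" by (rule choice)
  then obtain C where C: "\<forall>y. club K (C y) \<and> {x\<in>seg K. g x = y} \<inter> C y = {}" by (elim exE)
  obtain \<gamma> where "\<gamma> < K" "\<forall>j\<in>g ` seg K. \<gamma> \<in> C j"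
    using club_inter[OF K iso inf g, of C] C by blast
  moreover have "\<gamma> \<in> seg K" using \<open>\<gamma> < K\<close> by (simp add: seg_def)
  ultimately show False using C by blast
qed


lemma singleton_le_inf:
  assumes "infinite A"
  shows "|{x}| \<le>o |A|"
proof -
  have "A \<noteq> {}" using assms by auto
  then obtain a where "a \<in> A" by blast
  then have "inj_on (\<lambda>_. a) {x} \<and> (\<lambda>_. a) ` {x} \<subseteq> A" by simp
  then show ?thesis using card_of_ordLeq[of "{x}" A] by blast
qed

lemma PiE_card:
  fixes n :: nat
  assumes inf: "infinite B"
  shows "(\<forall>i\<in>{1..n}. |F i| \<le>o |B| ) \<Longrightarrow> |PiE {1..n} F| \<le>o |B|"
proof (induction n)
  case 0
  then show ?case using singleton_le_inf[OF inf] by simp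
next
  case (Suc n)
  have e: "{1..Suc n} = insert (Suc n) {1..n}" by auto
  have IH: "|PiE {1..n} F| \<le>o |B|" using Suc by simp
  have Fn: "|F (Suc n)| \<le>o |B|" using Suc.prems by simp
  have 1: "|PiE {1..Suc n} F| \<le>o |F (Suc n) \<times> PiE {1..n} F|"
    unfolding e PiE_insert_eq by (rule card_of_image)
  have 2: "|F (Suc n) \<times> PiE {1..n} F| \<le>o |B \<times> PiE {1..n} F|" by (rule card_of_Times_mono1[OF Fn])
  have 3: "|B \<times> PiE {1..n} F| \<le>o |B \<times> B|" by (rule card_of_Times_mono2[OF IH])
  have 4: "|B \<times> B| =o |B|" by (rule card_of_Times_same_infinite[OF inf])
  show ?case by (rule ordLeq_ordIso_trans[OF ordLeq_transitive[OF ordLeq_transitive[OF 1 2] 3] 4])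
qed

lemma Well_order_le: "Well_order {(x::'a::wellorder, y). x \<le> y}"
proof -
  let ?r = "{(x::'a, y). x \<le> y}"
  have F: "Field ?r = UNIV" by (auto simp: Field_def)
  have "?r - Id = {(x,y). x < y}" by auto
  then have "wf (?r - Id)" using wf by simp
  then show ?thesis unfolding well_order_on_def linear_order_on_def partial_order_on_def
      preorder_on_def refl_on_def trans_on_def antisym_on_def total_on_def F by auto
qed

lemma P_card:
  fixes kap lam :: "'a::wellorder"
  assumes inf: "infinite (seg kap)" and le: "lam \<le> kap"
    and fu: "\<forall>\<nu><lam. |Func (seg \<nu>) (seg kap)| \<le>o |seg kap|"
  shows "|small_partial_functions kap lam| \<le>o |seg kap|"
proof -
  define W where "W = {(x::'a, y). x \<le> y}"
  define r where "r = Restr W (seg lam)"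
  have Wr: "Well_order r" unfolding r_def W_def by (rule Well_order_Restr[OF Well_order_le])
  have Fr: "Field r = seg lam" unfolding r_def W_def by (auto simp: Field_def seg_def)
  have wr: "well_order_on (seg lam) r" using Wr Fr by simp
  let ?sk = "seg kap"
  have key: "\<exists>a\<in>seg lam. \<exists>h\<in>Func (seg a) (?sk \<times> ?sk). f = h ` seg a"
    if f: "f \<in> small_partial_functions kap lam" for f
  proof -
    have fs: "f \<subseteq> ?sk \<times> ?sk" and fl: "|f| <o |seg lam|"
      using f unfolding small_partial_functions_def by auto
    have "|f| <o r" by (rule ordLess_ordLeq_trans[OF fl card_of_least[OF wr]])
    then obtain a where a: "a \<in> Field r" and iso: "|f| =o Restr r (underS r a)"
      using ordLess_iff_ordIso_Restr[OF Wr card_of_Well_order] by blast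
    have FR: "Field (Restr r (underS r a)) = seg a"
      using a unfolding Fr r_def W_def by (auto simp: Field_def seg_def underS_def)
    obtain g where "bij_betw g (Field |f| ) (Field (Restr r (underS r a)))"
      using iso unfolding ordIso_def iso_def by blast
    then have g: "bij_betw g f (seg a)" unfolding FR Field_card_of .
    define h where "h = (\<lambda>x. if x \<in> seg a then inv_into f g x else undefined)"
    have hb: "bij_betw (inv_into f g) (seg a) f" by (rule bij_betw_inv_into[OF g])
    then have "h ` seg a = f" unfolding h_def bij_betw_def by auto
    moreover have "h \<in> Func (seg a) (?sk \<times> ?sk)"
      using hb fs unfolding h_def Func_def bij_betw_def by auto
    ultimately show ?thesis using a Fr by blast
  qed
  have sub: "small_partial_functions kap lam \<subseteq> (\<Union>a\<in>seg lam. (\<lambda>h. h ` seg a) ` Func (seg a) (?sk \<times> ?sk))"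
    using key by blast
  have "|?sk \<times> ?sk| =o |?sk|" by (rule card_of_Times_same_infinite[OF inf])
  then obtain j where j: "bij_betw j (?sk \<times> ?sk) ?sk" using card_of_ordIso by blast
  have U: "|\<Union>a\<in>seg lam. (\<lambda>h. h ` seg a) ` Func (seg a) (?sk \<times> ?sk)| \<le>o |?sk|"
  proof (rule card_of_UNION_ordLeq_infinite[OF inf])
    show "|seg lam| \<le>o |?sk|" by (rule card_of_mono1) (use le in \<open>auto simp: seg_def\<close>)
    show "\<forall>a\<in>seg lam. |(\<lambda>h. h ` seg a) ` Func (seg a) (?sk \<times> ?sk)| \<le>o |?sk|"
    proof
      fix a assume "a \<in> seg lam"
      then have "a < lam" by (simp add: seg_def)
      have 1: "|Func (seg a) (?sk \<times> ?sk)| \<le>o |Func (seg a) ?sk|"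
        by (rule Func_mono2) (use j in \<open>auto simp: bij_betw_def\<close>)
      have 2: "|Func (seg a) ?sk| \<le>o |?sk|" using fu \<open>a < lam\<close> by blast
      show "|(\<lambda>h. h ` seg a) ` Func (seg a) (?sk \<times> ?sk)| \<le>o |?sk|"
        by (rule ordLeq_transitive[OF card_of_image ordLeq_transitive[OF 1 2]])
    qed
  qed
  show ?thesis by (rule ordLeq_transitive[OF card_of_mono1[OF sub] U])
qed


theorem mainTheorem4:
  fixes kap lam :: "'a::wellorder"
    and d :: nat
    and k :: "nat \<Rightarrow> 'a"
    and p :: "(nat \<Rightarrow> 'a) \<Rightarrow> ('a \<times> 'a) set"
  assumes "is_cardinal kap" and "infinite (seg kap)"
    and "is_cardinal lam" and "infinite (seg lam)"
    and "lam \<le> kap"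
    and "\<forall>\<nu><lam. (card_of (Func (seg \<nu>) (seg kap)), card_of (seg kap)) \<in> ordLeq"
    and "d \<ge> 1"
    and "is_succ_card (k 1) kap"
    and "\<forall>i\<in>{1..<d}. \<exists>mu. is_cardinal mu
            \<and> (card_of (Pow (seg (k i))), card_of (seg mu)) \<in> ordLeq
            \<and> is_succ_card (k (Suc i)) mu
            \<and> (card_of (Func (seg (k i)) (seg mu)), card_of (seg mu)) \<in> ordIso"
    and "\<forall>x\<in>PiE {1..d} (\<lambda>i. seg (k i)). p x \<in> small_partial_functions kap lam"
  shows "\<exists>S. (\<forall>i\<in>{1..d}. stationary (k i) (S i))
             \<and> single_valued (\<Union> (p ` PiE {1..d} S))"
proof -
  note kinf = assms(2) and le = assms(5) and fu = assms(6) and k1 = assms(8) and hmu = assms(9)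
    and hp = assms(10)
  obtain mu where mu: "\<forall>i\<in>{1..<d}. is_cardinal (mu i)
            \<and> |Pow (seg (k i))| \<le>o |seg (mu i)|
            \<and> is_succ_card (k (Suc i)) (mu i)
            \<and> |Func (seg (k i)) (seg (mu i))| =o |seg (mu i)|"
    using bchoice[OF hmu] by blast
  define pr where "pr n = (if n = 0 then kap else mu n)" for n
  have SC: "is_succ_card (k (Suc n)) (pr n)" if "Suc n \<le> d" for n
  proof (cases "n = 0")
    case True then show ?thesis using k1 by (simp add: pr_def)
  next
    case False then have "n \<in> {1..<d}" using that by auto
    then show ?thesis using mu False by (simp add: pr_def)
  qed
  have isoK: "|seg (k (Suc n))| =o cardSuc |seg (pr n)|" and cardK: "is_cardinal (k (Suc n))"
    if "Suc n \<le> d" for n using SC[OF that] unfolding is_succ_card_def by auto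
  have up: "|seg (pr n)| \<le>o |seg (k (Suc n))|" if "Suc n \<le> d" for n
    by (rule ordLeq_ordIso_trans[OF cardSuc_ordLeq[OF card_of_Card_order] ordIso_symmetric[OF isoK[OF that]]])
  have kmu: "|seg (k n)| \<le>o |seg (pr n)|" and powmu: "|Pow (seg (k n))| \<le>o |seg (pr n)|"
    if "1 \<le> n" "Suc n \<le> d" for n
  proof -
    have "n \<in> {1..<d}" "n \<noteq> 0" using that by auto
    then show "|Pow (seg (k n))| \<le>o |seg (pr n)|" using mu by (simp add: pr_def)
    then show "|seg (k n)| \<le>o |seg (pr n)|"
      by (rule ordLeq_transitive[OF ordLess_imp_ordLeq[OF card_of_Pow]])
  qed
  have kapk: "|seg kap| \<le>o |seg (k i)|" if "1 \<le> i" "i \<le> d" for i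
    using that
  proof (induction i rule: dec_induct)
    case base
    then show ?case using up[of 0] by (simp add: pr_def)
  next
    case (step n)
    have "|seg (k n)| \<le>o |seg (k (Suc n))|"
      by (rule ordLeq_transitive[OF kmu up]) (use step in auto)
    then show ?case using step ordLeq_transitive by auto
  qed
  have kk: "|seg (k i)| \<le>o |seg (k j)|" if "1 \<le> i" "i \<le> j" "j \<le> d" for i j
    using that(2,3)
  proof (induction j rule: dec_induct)
    case base
    show ?case by (rule ordLeq_refl[OF card_of_Card_order])
  next
    case (step n)
    have "|seg (k n)| \<le>o |seg (k (Suc n))|"
      by (rule ordLeq_transitive[OF kmu up]) (use step that in auto)
    then show ?case using step ordLeq_transitive by auto
  qed
  have kinfi: "infinite (seg (k i))" if "1 \<le> i" "i \<le> d" for i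
    by (rule card_of_ordLeq_infinite[OF kapk[OF that] kinf])
  have prinf: "infinite (seg (pr n))" if "Suc n \<le> d" for n
  proof (cases "n = 0")
    case True then show ?thesis using kinf by (simp add: pr_def)
  next
    case False
    then show ?thesis using card_of_ordLeq_infinite[OF kmu kinfi] that by auto
  qed
  define Z where "Z = small_partial_functions kap lam"
  have ZC: "|Z| \<le>o |seg kap|" unfolding Z_def by (rule P_card[OF kinf le fu])
  have claim: "\<forall>q::(nat\<Rightarrow>'a) \<Rightarrow> ('a \<times> 'a) set. q ` PiE {1..n} (\<lambda>i. seg (k i)) \<subseteq> Z \<longrightarrow>
      (\<exists>S c. (\<forall>i\<in>{1..n}. stationary (k i) (S i)) \<and> (\<forall>x\<in>PiE {1..n} S. q x = c))"
    if "n \<le> d" for n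
    using that
  proof (induction n)
    case 0
    show ?case by auto
  next
    case (Suc n)
    have nd: "Suc n \<le> d" by (rule Suc.prems)
    have IH: "\<forall>q::(nat\<Rightarrow>'a) \<Rightarrow> ('a \<times> 'a) set. q ` PiE {1..n} (\<lambda>i. seg (k i)) \<subseteq> Z \<longrightarrow>
      (\<exists>S c. (\<forall>i\<in>{1..n}. stationary (k i) (S i)) \<and> (\<forall>x\<in>PiE {1..n} S. q x = c))"
      using Suc.IH nd by simp
    show ?case
    proof (intro allI impI)
      fix q :: "(nat\<Rightarrow>'a) \<Rightarrow> ('a \<times> 'a) set"
      assume hq: "q ` PiE {1..Suc n} (\<lambda>i. seg (k i)) \<subseteq> Z"
      define D where "D = PiE {1..n} (\<lambda>i. seg (k i))"
      define K where "K = k (Suc n)"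
      define X where "X = seg (pr n)"
      have isoKX: "|seg K| =o cardSuc |X|" unfolding K_def X_def by (rule isoK[OF nd])
      have cK: "is_cardinal K" unfolding K_def by (rule cardK[OF nd])
      have Xinf: "infinite X" unfolding X_def by (rule prinf[OF nd])
      define h where "h \<beta> = (\<lambda>x. if x \<in> D then q (x(Suc n := \<beta>)) else undefined)" for \<beta>
      have upd: "x(Suc n := \<beta>) \<in> PiE {1..Suc n} (\<lambda>i. seg (k i))" if "x \<in> D" "\<beta> \<in> seg K" for x \<beta>
        using that unfolding D_def K_def by (auto simp: PiE_iff extensional_def)
      have hF: "h \<beta> \<in> Func D Z" if "\<beta> \<in> seg K" for \<beta>
        using hq upd[OF _ that] unfolding h_def Func_def by auto
      have Dne: "D \<noteq> {}" unfolding D_def PiE_eq_empty_iff using kinfi nd by fastforce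
      have FD: "|Func D Z| \<le>o |X|"
      proof (cases "n = 0")
        case True
        then have D1: "D = {\<lambda>_. undefined}" unfolding D_def by simp
        have "inj_on (\<lambda>\<phi>. \<phi> (\<lambda>_. undefined)) (Func D Z)"
        proof (rule inj_onI)
          fix \<phi> \<psi> assume a: "\<phi> \<in> Func D Z" "\<psi> \<in> Func D Z" "\<phi> (\<lambda>_. undefined) = \<psi> (\<lambda>_. undefined)"
          show "\<phi> = \<psi>"
          proof
            fix v show "\<phi> v = \<psi> v"
            proof (cases "v = (\<lambda>_. undefined)")
              case True then show ?thesis using a(3) by simp
            next
              case False then have "v \<notin> D" unfolding D1 by simp
              then show ?thesis using a(1,2) unfolding Func_def by simp
            qed
          qed
        qed
        moreover have "(\<lambda>\<phi>. \<phi> (\<lambda>_. undefined)) ` Func D Z \<subseteq> Z" unfolding D1 Func_def by auto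
        ultimately have "|Func D Z| \<le>o |Z|" using card_of_ordLeq by blast
        then show ?thesis using ZC True ordLeq_transitive unfolding X_def pr_def by auto
      next
        case False
        then have n1: "1 \<le> n" by simp
        have Dk: "|D| \<le>o |seg (k n)|" unfolding D_def
          by (rule PiE_card[OF kinfi]) (use n1 nd kk in auto)
        then obtain i0 where i0: "inj_on i0 D" "i0 ` D \<subseteq> seg (k n)"
          using card_of_ordLeq[of D "seg (k n)"] by blast
        have 1: "|Func D Z| \<le>o |Func (seg (k n)) Z|" by (rule Func_mono1[OF i0 Dne])
        have "|Z| \<le>o |X|" unfolding X_def
          by (rule ordLeq_transitive[OF ZC ordLeq_transitive[OF kapk kmu]]) (use n1 nd in auto)
        then obtain j0 where j0: "inj_on j0 Z" "j0 ` Z \<subseteq> X" using card_of_ordLeq[of Z X] by blast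
        have 2: "|Func (seg (k n)) Z| \<le>o |Func (seg (k n)) X|" by (rule Func_mono2[OF j0])
        have "n \<in> {1..<d}" using n1 nd by auto
        then have 3: "|Func (seg (k n)) X| =o |X|" using mu False unfolding X_def pr_def by simp
        show ?thesis by (rule ordLeq_ordIso_trans[OF ordLeq_transitive[OF 1 2] 3])
      qed
      have "h ` seg K \<subseteq> Func D Z" using hF by blast
      then have hC: "|h ` seg K| \<le>o |X|" by (rule ordLeq_transitive[OF card_of_mono1 FD])
      obtain y where st: "stationary K {\<beta>\<in>seg K. h \<beta> = y}" using pigeon[OF cK isoKX Xinf hC] by blast
      define S' where "S' = {\<beta>\<in>seg K. h \<beta> = y}"
      have "S' \<inter> seg K \<noteq> {}" using st[unfolded stationary_def, THEN conjunct2, rule_format, OF club_seg[OF cK isoKX Xinf]] unfolding S'_def by simp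
      then obtain \<beta>0 where b0: "\<beta>0 \<in> seg K" "h \<beta>0 = y" unfolding S'_def by blast
      then have "y \<in> Func D Z" using hF by blast
      then have "y ` D \<subseteq> Z" unfolding Func_def by auto
      then have "\<exists>S c. (\<forall>i\<in>{1..n}. stationary (k i) (S i)) \<and> (\<forall>x\<in>PiE {1..n} S. y x = c)"
        using IH[rule_format, of y] unfolding D_def by simp
      then obtain S c where S: "\<forall>i\<in>{1..n}. stationary (k i) (S i)" and c: "\<forall>x\<in>PiE {1..n} S. y x = c"
        by blast
      define S2 where "S2 = S(Suc n := S')"
      have st2: "\<forall>i\<in>{1..Suc n}. stationary (k i) (S2 i)"
      proof
        fix i assume i: "i \<in> {1..Suc n}"
        show "stationary (k i) (S2 i)"
        proof (cases "i = Suc n")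
          case True then show ?thesis using st unfolding S2_def S'_def K_def by simp
        next
          case False then have "i \<in> {1..n}" using i by auto
          then show ?thesis using S False unfolding S2_def by simp
        qed
      qed
      have "\<forall>x\<in>PiE {1..Suc n} S2. q x = c"
      proof
        fix x assume x: "x \<in> PiE {1..Suc n} S2"
        define x0 where "x0 = x(Suc n := undefined)"
        have x0S: "x0 \<in> PiE {1..n} S" unfolding PiE_iff extensional_def mem_Collect_eq
        proof (intro conjI ballI allI impI)
          fix i assume "i \<in> {1..n}"
          then have i: "i \<in> {1..Suc n}" "i \<noteq> Suc n" by auto
          have "x i \<in> S2 i" by (rule PiE_mem[OF x i(1)])
          then show "x0 i \<in> S i" using i unfolding x0_def S2_def by simp
        next
          fix i assume i: "i \<notin> {1..n}"
          show "x0 i = undefined"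
          proof (cases "i = Suc n")
            case True then show ?thesis unfolding x0_def by simp
          next
            case False then have "i \<notin> {1..Suc n}" using i by auto
            then show ?thesis using PiE_arb[OF x] False unfolding x0_def by simp
          qed
        qed
        have "\<forall>i\<in>{1..n}. S i \<subseteq> seg (k i)" using S unfolding stationary_def by blast
        then have x0D: "x0 \<in> D" using x0S unfolding D_def by (auto simp: PiE_iff extensional_def)
        have "Suc n \<in> {1..Suc n}" by simp
        from PiE_mem[OF x this] have xs: "x (Suc n) \<in> S'" unfolding S2_def by simp
        then have "h (x (Suc n)) = y" unfolding S'_def by blast
        moreover have "h (x (Suc n)) x0 = q x" unfolding h_def x0_def using x0D[unfolded x0_def] by simp
        moreover have "y x0 = c" using c x0S by blast
        ultimately show "q x = c" by simp
      qed
      then show "\<exists>S c. (\<forall>i\<in>{1..Suc n}. stationary (k i) (S i)) \<and> (\<forall>x\<in>PiE {1..Suc n} S. q x = c)"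
        using st2 by blast
    qed
  qed
  have "p ` PiE {1..d} (\<lambda>i. seg (k i)) \<subseteq> Z" using hp unfolding Z_def by blast
  then obtain S c where S: "\<forall>i\<in>{1..d}. stationary (k i) (S i)" and c: "\<forall>x\<in>PiE {1..d} S. p x = c"
    using claim[of d] by blast
  have "single_valued (\<Union> (p ` PiE {1..d} S))"
  proof (cases "PiE {1..d} S = {}")
    case True then show ?thesis by (simp add: single_valued_def)
  next
    case False
    then obtain x0 where x0: "x0 \<in> PiE {1..d} S" by blast
    have "\<forall>i\<in>{1..d}. S i \<subseteq> seg (k i)" using S unfolding stationary_def by blast
    then have "x0 \<in> PiE {1..d} (\<lambda>i. seg (k i))" using x0 by (auto simp: PiE_iff extensional_def)
    then have "p x0 \<in> Z" using hp unfolding Z_def by blast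
    then have sv: "single_valued c" using c x0 unfolding Z_def small_partial_functions_def by auto
    have "p ` PiE {1..d} S = {c}" using c False by auto
    then show ?thesis using sv by simp
  qed
  then show ?thesis using S by blast
qed

end
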